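(* Let $H=\mathbb{R}^n$ be the (not necessarily orthogonal) direct sum of two subspaces $X$ and $Y$. If $\mathcal{F}_1$ is a frame for $X$ with the exact PR-redundancy property and $\mathcal{F}_2$ is a frame for $Y$ with the exact PR-redundancy property, then $\mathcal{F}=\mathcal{F}_1\cup\mathcal{F}_2$ is a frame for $H$ with the exact PR-redundancy property.
   Context: For a finite-dimensional real inner product space $V$ (here $V=X$, $Y$, or $H$ with the inner product inherited from $\mathbb{R}^n$), a frame $\mathcal{G}=\{g_i\}_{i=1}^N$ for $V$ is a finite sequence in $V$ spanning $V$. Let $\mathcal{S}_2(V)$ be the set of self-adjoint operators on $V$ of rank at most $2$, and for $\Lambda\subseteq\{1,\dots,N\}$ let $\Theta_{L(\mathcal{G}_\Lambda)}(A)=(\langle Ag_i,g_i\rangle)_{i\in\Lambda}$ for self-adjoint $A$ on $V$. $\mathcal{G}$ has the exact PR-redundancy property (as a frame for $V$) if for every proper subset $\Lambda\subsetneq\{1,\dots,N\}$, $\ker(\Theta_{L(\mathcal{G}_\Lambda)})\cap\mathcal{S}_2(V)\neq\ker(\Theta_{L(\mathcal{G})})\cap\mathcal{S}_2(V)$. The union $\mathcal{F}_1\cup\mathcal{F}_2$ means the concatenated sequence. *)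

theory Defs
  imports "HOL-Analysis.Analysis"
begin

(* Operators on a subspace V of R^n are represented canonically as linear maps on
   R^n that map V into V and vanish on the orthogonal complement of V.
   This gives a bijection with linear operators V -> V. *)
definition ops_on :: "(real^'n) set \<Rightarrow> (real^'n \<Rightarrow> real^'n) set" where
  "ops_on V = {A. linear A \<and> A ` V \<subseteq> V \<and> (\<forall>x. (\<forall>v\<in>V. v \<bullet> x = 0) \<longrightarrow> A x = 0)}"

definition S2 :: "(real^'n) set \<Rightarrow> (real^'n \<Rightarrow> real^'n) set" where
  "S2 V = {A \<in> ops_on V. (\<forall>x\<in>V. \<forall>y\<in>V. A x \<bullet> y = x \<bullet> A y) \<and> dim (A ` V) \<le> 2}"

definition kerS2 :: "(real^'n) set \<Rightarrow> (real^'n) list \<Rightarrow> nat set \<Rightarrow> (real^'n \<Rightarrow> real^'n) set" where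
  "kerS2 V G \<Lambda> = {A \<in> S2 V. \<forall>i\<in>\<Lambda>. A (G ! i) \<bullet> (G ! i) = 0}"

definition is_frame :: "(real^'n) set \<Rightarrow> (real^'n) list \<Rightarrow> bool" where
  "is_frame V G \<longleftrightarrow> set G \<subseteq> V \<and> span (set G) = V"

definition exact_PR_redundancy :: "(real^'n) set \<Rightarrow> (real^'n) list \<Rightarrow> bool" where
  "exact_PR_redundancy V G \<longleftrightarrow>
     (\<forall>\<Lambda>. \<Lambda> \<subset> {..<length G} \<longrightarrow> kerS2 V G \<Lambda> \<noteq> kerS2 V G {..<length G})"

end

theory Submission
  imports Defs
begin

lemma epr_witness:
  assumes "exact_PR_redundancy V G" "j < length G"
  shows "\<exists>A\<in>S2 V. (\<forall>i<length G. i \<noteq> j \<longrightarrow> A (G!i) \<bullet> (G!i) = 0) \<and> A (G!j) \<bullet> (G!j) \<noteq> 0"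
proof -
  let ?L = "{..<length G} - {j}"
  have "?L \<subset> {..<length G}" using assms(2) by auto
  then have ne: "kerS2 V G ?L \<noteq> kerS2 V G {..<length G}"
    using assms(1) unfolding exact_PR_redundancy_def by blast
  have "kerS2 V G {..<length G} \<subseteq> kerS2 V G ?L" unfolding kerS2_def by auto
  then obtain A where A: "A \<in> kerS2 V G ?L" "A \<notin> kerS2 V G {..<length G}" using ne by blast
  have AS: "A \<in> S2 V" and AL: "\<forall>i\<in>?L. A (G!i) \<bullet> (G!i) = 0" using A(1) unfolding kerS2_def by auto
  obtain i where i: "i < length G" "A (G!i) \<bullet> (G!i) \<noteq> 0" using A(2) AS unfolding kerS2_def by auto
  have "i = j" using i AL by auto
  then show ?thesis using AS AL i by auto
qed

lemma epr_intro:
  assumes "\<And>j. j < length G \<Longrightarrow> \<exists>A\<in>S2 V. (\<forall>i<length G. i \<noteq> j \<longrightarrow> A (G!i) \<bullet> (G!i) = 0) \<and> A (G!j) \<bullet> (G!j) \<noteq> 0"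
  shows "exact_PR_redundancy V G"
  unfolding exact_PR_redundancy_def
proof (intro allI impI)
  fix L assume L: "L \<subset> {..<length G}"
  then obtain j where j: "j < length G" "j \<notin> L" by auto
  obtain A where A: "A \<in> S2 V" "\<forall>i<length G. i \<noteq> j \<longrightarrow> A (G!i) \<bullet> (G!i) = 0" "A (G!j) \<bullet> (G!j) \<noteq> 0"
    using assms[OF j(1)] by blast
  have "A \<in> kerS2 V G L" unfolding kerS2_def using A L j by auto
  moreover have "A \<notin> kerS2 V G {..<length G}" unfolding kerS2_def using A j by auto
  ultimately show "kerS2 V G L \<noteq> kerS2 V G {..<length G}" by blast
qed

lemma proj_exists:
  fixes X Y :: "(real^'n) set"
  assumes "subspace X" "subspace Y" "X \<inter> Y = {0}"
    "{x + y | x y. x \<in> X \<and> y \<in> Y} = UNIV"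
  shows "\<exists>P. linear P \<and> (\<forall>h. P h \<in> X) \<and> (\<forall>x\<in>X. P x = x) \<and> (\<forall>y\<in>Y. P y = 0)"
proof -
  have ex: "\<exists>x. x \<in> X \<and> h - x \<in> Y" for h
  proof -
    have "h \<in> {x + y | x y. x \<in> X \<and> y \<in> Y}" using assms(4) by simp
    then obtain x y where "x \<in> X" "y \<in> Y" "h = x + y" by blast
    then show ?thesis by (intro exI[of _ x]) auto
  qed
  have uniq: "x = x'" if "x \<in> X" "h - x \<in> Y" "x' \<in> X" "h - x' \<in> Y" for h x x'
  proof -
    have a: "x - x' \<in> X" by (rule subspace_diff[OF assms(1) that(1) that(3)])
    have "(h - x') - (h - x) \<in> Y" by (rule subspace_diff[OF assms(2) that(4) that(2)])
    then have b: "x - x' \<in> Y" by simp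
    have "x - x' \<in> X \<inter> Y" using a b by (rule IntI)
    then have "x - x' = 0" unfolding assms(3) by simp
    then show ?thesis by simp
  qed
  define P where "P h = (SOME x. x \<in> X \<and> h - x \<in> Y)" for h
  have P: "P h \<in> X \<and> h - P h \<in> Y" for h unfolding P_def using someI_ex[OF ex] by blast
  have Pu: "P h = x" if "x \<in> X" "h - x \<in> Y" for h x using uniq[OF P[THEN conjunct1] P[THEN conjunct2] that] .
  have "linear P"
  proof (rule linearI)
    fix a b
    show "P (a + b) = P a + P b"
    proof (rule Pu)
      show "P a + P b \<in> X" using P assms(1) by (simp add: subspace_add)
      have e: "(a + b) - (P a + P b) = (a - P a) + (b - P b)" by simp
      show "a + b - (P a + P b) \<in> Y" unfolding e
        by (rule subspace_add[OF assms(2)]) (simp_all add: P)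
    qed
  next
    fix c :: real and a
    show "P (c *\<^sub>R a) = c *\<^sub>R P a"
    proof (rule Pu)
      show "c *\<^sub>R P a \<in> X" using P assms(1) by (simp add: subspace_scale)
      have e: "c *\<^sub>R a - c *\<^sub>R P a = c *\<^sub>R (a - P a)" by (simp add: scaleR_diff_right)
      show "c *\<^sub>R a - c *\<^sub>R P a \<in> Y" unfolding e
        by (rule subspace_scale[OF assms(2)]) (simp add: P)
    qed
  qed
  moreover have "\<forall>x\<in>X. P x = x" using Pu assms(2) by (simp add: subspace_0)
  moreover have "\<forall>y\<in>Y. P y = 0" using Pu assms(1) by (simp add: subspace_0)
  ultimately show ?thesis using P by blast
qed

lemma extend_S2:
  fixes P :: "real^'n \<Rightarrow> real^'n"
  assumes P: "linear P" "\<forall>h. P h \<in> X"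
    and A: "A \<in> S2 X"
  shows "(\<lambda>h. adjoint P (A (P h))) \<in> S2 UNIV \<and> (\<forall>h. adjoint P (A (P h)) \<bullet> h = A (P h) \<bullet> P h)"
proof -
  let ?B = "\<lambda>h. adjoint P (A (P h))"
  have linA: "linear A" and sym: "\<forall>x\<in>X. \<forall>y\<in>X. A x \<bullet> y = x \<bullet> A y" and dA: "dim (A ` X) \<le> 2"
    using A unfolding S2_def ops_on_def by auto
  have linB: "linear ?B"
    using linear_compose[OF linear_compose[OF P(1) linA] adjoint_linear[OF P(1)]]
    by (simp add: o_def)
  have quad: "?B h \<bullet> y = A (P h) \<bullet> P y" for h y
    using adjoint_clauses(2)[OF P(1)] by simp
  have symB: "?B x \<bullet> y = x \<bullet> ?B y" for x y
  proof -
    have "?B x \<bullet> y = A (P x) \<bullet> P y" by (rule quad)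
    also have "\<dots> = P x \<bullet> A (P y)" using sym P(2) by blast
    also have "\<dots> = x \<bullet> ?B y" using adjoint_clauses(1)[OF P(1)] by simp
    finally show ?thesis .
  qed
  have "?B ` UNIV \<subseteq> adjoint P ` (A ` X)" using P(2) by auto
  then have "dim (?B ` UNIV) \<le> dim (adjoint P ` (A ` X))" by (rule dim_subset)
  also have "\<dots> \<le> dim (A ` X)" by (rule dim_image_le[OF adjoint_linear[OF P(1)]])
  finally have "dim (?B ` UNIV) \<le> 2" using dA by simp
  moreover have "?B x = 0" if "\<forall>v\<in>UNIV. v \<bullet> x = 0" for x
  proof -
    have "x = 0" using that[rule_format, of x] by simp
    then show ?thesis using linear_0[OF linB] by simp
  qed
  ultimately have "?B \<in> S2 UNIV" using linB symB unfolding S2_def ops_on_def by auto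
  then show ?thesis using quad by simp
qed

lemma one_side:
  fixes X Y :: "(real^'n) set" and G :: "(real^'n) list"
  assumes "subspace X" "subspace Y" "X \<inter> Y = {0}"
    "{x + y | x y. x \<in> X \<and> y \<in> Y} = UNIV"
    and "is_frame X G" "exact_PR_redundancy X G" "j < length G"
  shows "\<exists>B\<in>S2 UNIV. (\<forall>i<length G. i \<noteq> j \<longrightarrow> B (G!i) \<bullet> (G!i) = 0) \<and> B (G!j) \<bullet> (G!j) \<noteq> 0
           \<and> (\<forall>y\<in>Y. B y \<bullet> y = 0)"
proof -
  obtain P where P: "linear P" "\<forall>h. P h \<in> X" "\<forall>x\<in>X. P x = x" "\<forall>y\<in>Y. P y = 0"
    using proj_exists[OF assms(1-4)] by blast
  obtain A where A: "A \<in> S2 X" "\<forall>i<length G. i \<noteq> j \<longrightarrow> A (G!i) \<bullet> (G!i) = 0" "A (G!j) \<bullet> (G!j) \<noteq> 0"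
    using epr_witness[OF assms(6,7)] by blast
  have GX: "G!i \<in> X" if "i < length G" for i using assms(5) that unfolding is_frame_def by auto
  note E = extend_S2[OF P(1,2) A(1)]
  have lin0: "A 0 = 0" using A(1) unfolding S2_def ops_on_def by (auto simp: linear_0)
  have q: "adjoint P (A (P h)) \<bullet> h = A (P h) \<bullet> P h" for h using E by blast
  show ?thesis
  proof (rule bexI[OF _ E[THEN conjunct1]], intro conjI allI impI ballI)
    fix i assume "i < length G" "i \<noteq> j"
    then show "adjoint P (A (P (G!i))) \<bullet> (G!i) = 0" using q[of "G!i"] A(2) GX P(3) by simp
  next
    show "adjoint P (A (P (G!j))) \<bullet> (G!j) \<noteq> 0" using q[of "G!j"] A(3) GX P(3) assms(7) by simp
  next
    fix y assume "y \<in> Y"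
    then show "adjoint P (A (P y)) \<bullet> y = 0" using q[of y] P(4) lin0 by simp
  qed
qed

theorem lemma1p8:
  fixes X Y :: "(real^'n) set" and F1 F2 :: "(real^'n) list"
  assumes "subspace X" and "subspace Y"
    and "X \<inter> Y = {0}"
    and "{x + y | x y. x \<in> X \<and> y \<in> Y} = UNIV"
    and "is_frame X F1" and "exact_PR_redundancy X F1"
    and "is_frame Y F2" and "exact_PR_redundancy Y F2"
  shows "is_frame UNIV (F1 @ F2) \<and> exact_PR_redundancy UNIV (F1 @ F2)"
proof
  have sX: "span (set F1) = X" and sY: "span (set F2) = Y"
    using assms(5,7) unfolding is_frame_def by auto
  have "span (set (F1 @ F2)) = UNIV"
  proof -
    have "h \<in> span (set (F1 @ F2))" for h
    proof -
      have "h \<in> {x + y | x y. x \<in> X \<and> y \<in> Y}" using assms(4) by simp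
      then obtain x y where xy: "x \<in> X" "y \<in> Y" "h = x + y" by blast
      have s1: "span (set F1) \<subseteq> span (set (F1 @ F2))" by (rule span_mono) simp
      have s2: "span (set F2) \<subseteq> span (set (F1 @ F2))" by (rule span_mono) simp
      have "x \<in> span (set (F1 @ F2))" using xy(1) sX s1 by blast
      moreover have "y \<in> span (set (F1 @ F2))" using xy(2) sY s2 by blast
      ultimately show ?thesis using xy(3) by (simp add: span_add)
    qed
    then show ?thesis by auto
  qed
  then show "is_frame UNIV (F1 @ F2)" unfolding is_frame_def by simp
  have X2: "Y \<inter> X = {0}" using assms(3) by (simp add: Int_commute)
  have sum2: "{y + x | y x. y \<in> Y \<and> x \<in> X} = UNIV"
  proof -
    have "h \<in> {y + x | y x. y \<in> Y \<and> x \<in> X}" for h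
    proof -
      have "h \<in> {x + y | x y. x \<in> X \<and> y \<in> Y}" using assms(4) by simp
      then obtain x y where xy: "x \<in> X" "y \<in> Y" "h = x + y" by blast
      then have "h = y + x" by (simp add: add.commute)
      then show ?thesis using xy(1,2) by blast
    qed
    then show ?thesis by auto
  qed
  show "exact_PR_redundancy UNIV (F1 @ F2)"
  proof (rule epr_intro)
    fix j assume j: "j < length (F1 @ F2)"
    show "\<exists>A\<in>S2 UNIV. (\<forall>i<length (F1 @ F2). i \<noteq> j \<longrightarrow> A ((F1 @ F2)!i) \<bullet> ((F1 @ F2)!i) = 0) \<and> A ((F1 @ F2)!j) \<bullet> ((F1 @ F2)!j) \<noteq> 0"
    proof (cases "j < length F1")
      case True
      obtain B where B: "B \<in> S2 UNIV" "\<forall>i<length F1. i \<noteq> j \<longrightarrow> B (F1!i) \<bullet> (F1!i) = 0"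
        "B (F1!j) \<bullet> (F1!j) \<noteq> 0" "\<forall>y\<in>Y. B y \<bullet> y = 0"
        using one_side[OF assms(1-6) True] by blast
      have F2Y: "F2!k \<in> Y" if "k < length F2" for k
      proof -
        have "F2!k \<in> set F2" using that by (rule nth_mem)
        then show ?thesis using assms(7) unfolding is_frame_def by blast
      qed
      show ?thesis
      proof (rule bexI[OF _ B(1)], intro conjI allI impI)
        fix i assume i: "i < length (F1 @ F2)" "i \<noteq> j"
        show "B ((F1 @ F2)!i) \<bullet> ((F1 @ F2)!i) = 0"
        proof (cases "i < length F1")
          case True then show ?thesis using B(2) i by (simp add: nth_append)
        next
          case False then show ?thesis using B(4) F2Y i by (simp add: nth_append)
        qed
      next
        show "B ((F1 @ F2)!j) \<bullet> ((F1 @ F2)!j) \<noteq> 0" using B(3) True by (simp add: nth_append)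
      qed
    next
      case False
      define k where "k = j - length F1"
      have k: "k < length F2" using j False unfolding k_def by auto
      obtain B where B: "B \<in> S2 UNIV" "\<forall>i<length F2. i \<noteq> k \<longrightarrow> B (F2!i) \<bullet> (F2!i) = 0"
        "B (F2!k) \<bullet> (F2!k) \<noteq> 0" "\<forall>y\<in>X. B y \<bullet> y = 0"
        using one_side[OF assms(2) assms(1) X2 sum2 assms(7,8) k] by blast
      have F1X: "F1!k' \<in> X" if "k' < length F1" for k'
      proof -
        have "F1!k' \<in> set F1" using that by (rule nth_mem)
        then show ?thesis using assms(5) unfolding is_frame_def by blast
      qed
      show ?thesis
      proof (rule bexI[OF _ B(1)], intro conjI allI impI)
        fix i assume i: "i < length (F1 @ F2)" "i \<noteq> j"
        show "B ((F1 @ F2)!i) \<bullet> ((F1 @ F2)!i) = 0"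
        proof (cases "i < length F1")
          case True then show ?thesis using B(4) F1X i by (simp add: nth_append)
        next
          case c: False
          have "i - length F1 \<noteq> k" using c False i unfolding k_def by auto
          then show ?thesis using B(2) i c by (simp add: nth_append)
        qed
      next
        show "B ((F1 @ F2)!j) \<bullet> ((F1 @ F2)!j) \<noteq> 0" using B(3) False unfolding k_def by (simp add: nth_append)
      qed
    qed
  qed
qed

end
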